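(* Let $K$ be an imaginary quadratic field with discriminant $d_K$, let $f\ge1$ and let $\mathcal{O}$ be the order of conductor $f$ in $K$, of discriminant $D=f^2d_K$. Let $\tau=a/b\in K\cap\mathbb{H}$ with $a,b\in\mathcal{O}_K$, $b\ne0$, have discriminant $D(\tau)=D$. Then $\mathrm{pr}_D([\Xi_D(Q_\tau)])=[\langle a,b\rangle]$ in $\mathrm{Cl}_K$, where $\langle a,b\rangle=a\mathcal{O}_K+b\mathcal{O}_K$.
   Context: $\mathbb{H}$ is the upper half-plane. For $\tau\in K\cap\mathbb{H}$, $Q_\tau(x,y)=Ax^2+Bxy+Cy^2$ is the unique form with $A,B,C\in\mathbb{Z}$, $\gcd(A,B,C)=1$, $A>0$, $A\tau^2+B\tau+C=0$, and $D(\tau)=B^2-4AC$. For a positive definite form $Q=Ax^2+Bxy+Cy^2$ of discriminant $D$, $\Xi_D(Q):=\mathbb{Z}A+\mathbb{Z}\frac{-B+\sqrt{D}}{2}$, which is an invertible ideal of $\mathcal{O}$. $\mathrm{Cl}(\mathcal{O})$ is the group of invertible fractional $\mathcal{O}$-ideals modulo principal ones, and $\mathrm{pr}_D\colon\mathrm{Cl}(\mathcal{O})\to\mathrm{Cl}_K$ is the well-defined map $[\mathfrak{a}]\mapsto[\mathfrak{a}\mathcal{O}_K]$. *)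

theory Defs
  imports Complex_Main "HOL-Computational_Algebra.Squarefree"
begin

definition fundamental_disc :: "int \<Rightarrow> bool" where
  "fundamental_disc d \<longleftrightarrow> d \<noteq> 1 \<and>
     ((d mod 4 = 1 \<and> squarefree d) \<or>
      (\<exists>m. d = 4 * m \<and> (m mod 4 = 2 \<or> m mod 4 = 3) \<and> squarefree m))"

definition csqrt_neg :: "int \<Rightarrow> complex" where
  "csqrt_neg d = \<i> * complex_of_real (sqrt (real_of_int (- d)))"

definition qfield :: "int \<Rightarrow> complex set" where
  "qfield dK = {of_rat r + of_rat s * csqrt_neg dK | r s. True}"

definition omega :: "int \<Rightarrow> complex" where
  "omega dK = (of_int dK + csqrt_neg dK) / 2"

definition qorder :: "int \<Rightarrow> nat \<Rightarrow> complex set" where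
  "qorder dK f = {of_int m + of_int n * of_nat f * omega dK | m n. True}"

abbreviation ring_of_integers :: "int \<Rightarrow> complex set" where
  "ring_of_integers dK \<equiv> qorder dK 1"

definition upper_half_plane :: "complex set" where
  "upper_half_plane = {z. Im z > 0}"

definition Xi :: "int \<Rightarrow> int \<Rightarrow> int \<Rightarrow> int \<Rightarrow> complex set" where
  "Xi D A B C = {of_int m * of_int A + of_int n * ((- of_int B + csqrt_neg D) / 2) | m n. True}"

definition ext_OK :: "int \<Rightarrow> complex set \<Rightarrow> complex set" where
  "ext_OK dK I = {x. \<exists>xs ys. length xs = length ys \<and> set xs \<subseteq> I \<and>
      set ys \<subseteq> ring_of_integers dK \<and> x = sum_list (map2 (*) xs ys)}"

definition ideal2 :: "int \<Rightarrow> complex \<Rightarrow> complex \<Rightarrow> complex set" where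
  "ideal2 dK a b = {u * a + v * b | u v. u \<in> ring_of_integers dK \<and> v \<in> ring_of_integers dK}"

definition same_class :: "int \<Rightarrow> complex set \<Rightarrow> complex set \<Rightarrow> bool" where
  "same_class dK I J \<longleftrightarrow> (\<exists>c\<in>qfield dK. c \<noteq> 0 \<and> (\<lambda>z. c * z) ` I = J)"

end

theory Submission
  imports Defs
begin

lemma OK_zero: "0 \<in> qorder dK 1"
  unfolding qorder_def by (rule CollectI, rule exI[of _ 0], rule exI[of _ 0]) simp

lemma OK_add: "x \<in> qorder dK 1 \<Longrightarrow> y \<in> qorder dK 1 \<Longrightarrow> x + y \<in> qorder dK 1"
proof -
  assume "x \<in> qorder dK 1" "y \<in> qorder dK 1"
  then obtain m n m' n' where "x = of_int m + of_int n * of_nat 1 * omega dK"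
    "y = of_int m' + of_int n' * of_nat 1 * omega dK" unfolding qorder_def by blast
  then have "x + y = of_int (m+m') + of_int (n+n') * of_nat 1 * omega dK"
    by (simp add: algebra_simps)
  then show ?thesis unfolding qorder_def by blast
qed

lemma OK_smult: "x \<in> qorder dK 1 \<Longrightarrow> of_int k * x \<in> qorder dK 1"
proof -
  assume "x \<in> qorder dK 1"
  then obtain m n where "x = of_int m + of_int n * of_nat 1 * omega dK"
    unfolding qorder_def by blast
  then have "of_int k * x = of_int (k*m) + of_int (k*n) * of_nat 1 * omega dK"
    by (simp add: algebra_simps)
  then show ?thesis unfolding qorder_def by blast
qed

lemma OK_qfield: "x \<in> qorder dK 1 \<Longrightarrow> x \<in> qfield dK"
proof -
  assume "x \<in> qorder dK 1"
  then obtain m n where x: "x = of_int m + of_int n * of_nat 1 * omega dK"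
    unfolding qorder_def by blast
  have "x = of_rat (of_int m + of_int n * of_int dK / 2) + of_rat (of_int n / 2) * csqrt_neg dK"
    unfolding x omega_def by (simp add: of_rat_add of_rat_mult of_rat_divide field_simps)
  then show ?thesis unfolding qfield_def by blast
qed

theorem proposition5p8:
  fixes dK :: int and f :: nat and D :: int and a b \<tau> :: complex and A B C :: int
  assumes "fundamental_disc dK" and "dK < 0"
    and "f \<ge> 1" and "D = int f ^ 2 * dK"
    and "a \<in> ring_of_integers dK" and "b \<in> ring_of_integers dK" and "b \<noteq> 0"
    and "\<tau> = a / b" and "\<tau> \<in> upper_half_plane"
    and "gcd (gcd A B) C = 1" and "A > 0"
    and "of_int A * \<tau>^2 + of_int B * \<tau> + of_int C = 0"
    and "B^2 - 4 * A * C = D"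
  shows "same_class dK (ext_OK dK (Xi D A B C)) (ideal2 dK a b)"
proof -
  let ?O = "qorder dK 1"
  define s where "s = 2 * of_int A * \<tau> + of_int B"
  have "s^2 = of_int D"
  proof -
    have "s^2 = 4 * of_int A * (of_int A * \<tau>^2 + of_int B * \<tau> + of_int C) + of_int (B^2 - 4*A*C)"
      unfolding s_def by (simp add: algebra_simps power2_eq_square)
    then show ?thesis using assms(12,13) by simp
  qed
  have D0: "D < 0" using assms(2,3,4) by (simp add: mult_pos_neg)
  have cs2: "(csqrt_neg D)^2 = of_int D"
  proof -
    have "(sqrt (real_of_int (- D)))^2 = real_of_int (- D)" using D0 by simp
    have "(complex_of_real (sqrt (real_of_int (- D))))^2 = complex_of_real ((sqrt (real_of_int (- D)))^2)"
      by (rule of_real_power[symmetric])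
    also have "\<dots> = complex_of_real (real_of_int (- D))" using \<open>_ = real_of_int (- D)\<close> by (rule arg_cong)
    also have "\<dots> = - of_int D" by simp
    finally have "(complex_of_real (sqrt (real_of_int (- D))))^2 = - of_int D" .
    then show ?thesis unfolding csqrt_neg_def by (simp add: power_mult_distrib)
  qed
  have "(s - csqrt_neg D) * (s + csqrt_neg D) = 0"
    using \<open>s^2 = of_int D\<close> cs2 by (simp add: algebra_simps power2_eq_square)
  moreover have "s + csqrt_neg D \<noteq> 0"
  proof -
    have "Im s > 0" using assms(9,11) unfolding s_def upper_half_plane_def by simp
    moreover have "Im (csqrt_neg D) \<ge> 0" unfolding csqrt_neg_def using D0 by simp
    ultimately have "Im (s + csqrt_neg D) > 0" by simp
    then show ?thesis by (metis zero_complex.sel(2) less_irrefl)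
  qed
  ultimately have s: "s = csqrt_neg D" by simp
  have Ane: "(of_int A :: complex) \<noteq> 0" using assms(11) by simp
  have halfs: "(- of_int B + csqrt_neg D) / 2 = of_int A * \<tau>"
    using s unfolding s_def by (simp add: algebra_simps)
  have bt: "b * \<tau> = a" using assms(7,8) by simp
  define c where "c = b / of_int A"
  have cq: "c \<in> qfield dK"
  proof -
    obtain r1 r2 where "b = of_rat r1 + of_rat r2 * csqrt_neg dK"
      using OK_qfield[OF assms(6)] unfolding qfield_def by blast
    then have "c = of_rat (r1 / of_int A) + of_rat (r2 / of_int A) * csqrt_neg dK"
      unfolding c_def by (simp add: of_rat_divide add_divide_distrib)
    then show ?thesis unfolding qfield_def by blast
  qed
  have c0: "c \<noteq> 0" unfolding c_def using assms(7) Ane by simp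
  have Xi_mem: "x \<in> Xi D A B C \<longleftrightarrow> (\<exists>m n. x = of_int A * (of_int m + of_int n * \<tau>))" for x
    unfolding Xi_def halfs by (auto simp: algebra_simps)
  have sub: "\<exists>u v. u \<in> ?O \<and> v \<in> ?O \<and> c * sum_list (map2 (*) xs ys) = u * a + v * b"
    if "length xs = length ys" "set xs \<subseteq> Xi D A B C" "set ys \<subseteq> ?O" for xs ys
    using that
  proof (induction xs arbitrary: ys)
    case Nil
    then show ?case using OK_zero by (intro exI[of _ 0]) auto
  next
    case (Cons x xs)
    then obtain y ys' where ys: "ys = y # ys'" by (cases ys) auto
    from Cons.prems ys obtain u v where uv: "u \<in> ?O" "v \<in> ?O"
      "c * sum_list (map2 (*) xs ys') = u * a + v * b"
      using Cons.IH[of ys'] by auto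
    from Cons.prems obtain m n where x: "x = of_int A * (of_int m + of_int n * \<tau>)"
      using Xi_mem by auto
    have y: "y \<in> ?O" using Cons.prems ys by auto
    have "c * sum_list (map2 (*) (x#xs) ys) = c * (x * y) + c * sum_list (map2 (*) xs ys')"
      using ys by (simp add: algebra_simps)
    also have "c * (x * y) = (of_int n * y) * a + (of_int m * y) * b"
      unfolding c_def x using Ane bt[symmetric] by (simp add: field_simps)
    finally have "c * sum_list (map2 (*) (x#xs) ys) = (of_int n * y + u) * a + (of_int m * y + v) * b"
      using uv(3) by (simp add: algebra_simps)
    moreover have "of_int n * y + u \<in> ?O" "of_int m * y + v \<in> ?O"
      using OK_add OK_smult y uv by auto
    ultimately show ?case by blast
  qed
  have "(\<lambda>z. c * z) ` ext_OK dK (Xi D A B C) = ideal2 dK a b"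
  proof
    show "(\<lambda>z. c * z) ` ext_OK dK (Xi D A B C) \<subseteq> ideal2 dK a b"
      unfolding ext_OK_def ideal2_def using sub by fastforce
  next
    show "ideal2 dK a b \<subseteq> (\<lambda>z. c * z) ` ext_OK dK (Xi D A B C)"
    proof
      fix z assume "z \<in> ideal2 dK a b"
      then obtain u v where uv: "u \<in> ?O" "v \<in> ?O" "z = u * a + v * b"
        unfolding ideal2_def by blast
      have x1: "of_int A * \<tau> \<in> Xi D A B C" unfolding Xi_mem
        by (rule exI[of _ 0], rule exI[of _ 1]) simp
      have x2: "of_int A \<in> Xi D A B C" unfolding Xi_mem
        by (rule exI[of _ 1], rule exI[of _ 0]) simp
      let ?w = "sum_list (map2 (*) [of_int A * \<tau>, of_int A] [u, v])"
      have "?w \<in> ext_OK dK (Xi D A B C)"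
        unfolding ext_OK_def using x1 x2 uv by (intro CollectI exI[of _ "[of_int A * \<tau>, of_int A]"] exI[of _ "[u,v]"]) auto
      moreover have "z = c * ?w"
        unfolding uv(3) c_def using Ane bt[symmetric] by (simp add: field_simps)
      ultimately show "z \<in> (\<lambda>z. c * z) ` ext_OK dK (Xi D A B C)" by blast
    qed
  qed
  then show ?thesis unfolding same_class_def using cq c0 by blast
qed

end
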